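(* Let $P\in\Psi^q(\mathscr A_\theta)$ with $\Re q<-n$. Then $$\operatorname{Trace}(P)=\int_{\mathbb R^n}\tau\big[\rho(\xi)\big]\,d\xi,$$ where $\rho\in S^q(\mathbb R^n;\mathscr A_\theta)$ is any normalized symbol of $P$, i.e. any $\rho\in S^q(\mathbb R^n;\mathscr A_\theta)$ with $P=P_\rho$ and $\int_{\mathbb R^n}\rho(\xi)\,d\xi=\sum_{k\in\mathbb Z^n}\rho(k)$.
   Context: Fix $n\ge 2$ and a real antisymmetric $n\times n$ matrix $\theta$. The noncommutative torus $A_\theta$ is the $C^*$-algebra generated by unitaries $U_1,\dots,U_n$ with $U_kU_j=e^{2i\pi\theta_{jk}}U_jU_k$; $U^k=U_1^{k_1}\cdots U_n^{k_n}$; $\|\cdot\|$ is the $C^*$-norm; $\tau$ is the continuous trace on $A_\theta$ with $\tau(U^0)=1$, $\tau(U^k)=0$ for $k\neq0$. $\mathcal H_\theta$ is the Hilbert space completion of $A_\theta$ for $(u,v)=\tau(uv^* )$, with orthonormal basis $(U^k)$. $\mathbb R^n$ acts by $*$-automorphisms $\alpha_s$ with $\alpha_s(U^k)=e^{is\cdot k}U^k$; $\mathscr A_\theta$ is the Fréchet algebra of smooth elements (seminorms $u\mapsto\|\delta^\alpha u\|$, $\delta_j(U^k)=k_jU^k$). For $q\in\mathbb C$, $S_q(\mathbb R^n;\mathscr A_\theta)$ is the set of smooth maps $\mathbb R^n\setminus0\to\mathscr A_\theta$ homogeneous of degree $q$; $S^q(\mathbb R^n;\mathscr A_\theta)$ is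 the set of smooth $\rho:\mathbb R^n\to\mathscr A_\theta$ for which there are $\rho_{q-j}\in S_{q-j}$ with $\|\delta^\alpha\partial_\xi^\beta(\rho-\sum_{j<N}\rho_{q-j})(\xi)\|\le C_{N\alpha\beta}|\xi|^{\Re q-N-|\beta|}$ for $|\xi|\ge1$. $P_\rho$ is the pseudodifferential operator $P_\rho u=\iint e^{is\cdot\xi}\rho(\xi)\alpha_{-s}(u)\,ds\,(2\pi)^{-n}d\xi$, i.e. $P_\rho(\sum u_kU^k)=\sum u_k\rho(k)U^k$; $\Psi^q(\mathscr A_\theta)=\{P_\rho:\rho\in S^q\}$. When $\Re q<-n$, $P\in\Psi^q$ extends to a trace-class operator on $\mathcal H_\theta$, the integral $\int\rho(\xi)\,d\xi$ and the series $\sum_k\rho(k)$ converge absolutely in $A_\theta$, and $P$ admits at least one normalized symbol. *)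

theory Defs
  imports "HOL-Analysis.Analysis"
begin

text \<open>Elements of A_theta are represented,
via the faithful GNS (left regular) representation on H_theta = l2(Z^n) (basis U^k = delta_k),
as bounded operators on l2(Z^n), given by their matrices M m k = (u delta_k, delta_m); the
C*-norm is the operator norm.\<close>

type_synonym 'n idx = "int^'n"

definition fsupp :: "('a \<Rightarrow> complex) \<Rightarrow> bool" where
  "fsupp f \<longleftrightarrow> finite {k. f k \<noteq> 0}"

definition l2fin :: "('a \<Rightarrow> complex) \<Rightarrow> real" where
  "l2fin f = sqrt (\<Sum>k\<in>{k. f k \<noteq> 0}. (cmod (f k))\<^sup>2)"

definition bil :: "('a \<Rightarrow> 'a \<Rightarrow> complex) \<Rightarrow> ('a \<Rightarrow> complex) \<Rightarrow> ('a \<Rightarrow> complex) \<Rightarrow> complex" where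
  "bil M f g = (\<Sum>m\<in>{m. g m \<noteq> 0}. \<Sum>k\<in>{k. f k \<noteq> 0}. cnj (g m) * M m k * f k)"

definition opvals :: "('a \<Rightarrow> 'a \<Rightarrow> complex) \<Rightarrow> real set" where
  "opvals M = {cmod (bil M f g) | f g. fsupp f \<and> fsupp g \<and> l2fin f \<le> 1 \<and> l2fin g \<le> 1}"

definition opnorm :: "('a \<Rightarrow> 'a \<Rightarrow> complex) \<Rightarrow> real" where
  "opnorm M = Sup (opvals M)"

lemma bil_zero_vec: "bil M (\<lambda>_. 0) g = 0" by (simp add: bil_def)

lemma zero_in_opvals: "0 \<in> opvals M"
  unfolding opvals_def
  by (rule CollectI, rule exI[of _ "\<lambda>_. 0"], rule exI[of _ "\<lambda>_. 0"])
     (simp add: bil_zero_vec fsupp_def l2fin_def)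

lemma opvals_ne: "opvals M \<noteq> {}" using zero_in_opvals by blast

lemma bil_add: "bil (\<lambda>m k. M m k + N m k) f g = bil M f g + bil N f g"
  by (simp add: bil_def sum.distrib ring_distribs)

lemma bil_uminus: "bil (\<lambda>m k. - M m k) f g = - bil M f g"
  by (simp add: bil_def sum_negf)

lemma bil_scale: "bil (\<lambda>m k. c * M m k) f g = c * bil M f g"
  by (simp add: bil_def sum_distrib_left mult.commute mult.left_commute)

lemma opvals_le: "bdd_above (opvals M) \<Longrightarrow> fsupp f \<Longrightarrow> fsupp g \<Longrightarrow> l2fin f \<le> 1 \<Longrightarrow> l2fin g \<le> 1
  \<Longrightarrow> cmod (bil M f g) \<le> opnorm M"
  unfolding opnorm_def by (rule cSup_upper) (auto simp: opvals_def)

lemma opnorm_le: "(\<And>f g. fsupp f \<Longrightarrow> fsupp g \<Longrightarrow> l2fin f \<le> 1 \<Longrightarrow> l2fin g \<le> 1 \<Longrightarrow> cmod (bil M f g) \<le> B)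
  \<Longrightarrow> opnorm M \<le> B"
  unfolding opnorm_def by (rule cSup_least[OF opvals_ne]) (auto simp: opvals_def)

lemma bdd_opvalsI: "(\<And>f g. fsupp f \<Longrightarrow> fsupp g \<Longrightarrow> l2fin f \<le> 1 \<Longrightarrow> l2fin g \<le> 1 \<Longrightarrow> cmod (bil M f g) \<le> B)
  \<Longrightarrow> bdd_above (opvals M)"
  unfolding opvals_def bdd_above_def by auto

lemma opnorm_nonneg: "bdd_above (opvals M) \<Longrightarrow> 0 \<le> opnorm M"
  unfolding opnorm_def using zero_in_opvals by (rule cSup_upper2) auto

typedef ('n::finite) bop = "{M :: 'n idx \<Rightarrow> 'n idx \<Rightarrow> complex. bdd_above (opvals M)}"
  by (rule exI[of _ "\<lambda>_ _. 0"]) (auto intro!: bdd_opvalsI[where B=0] simp: bil_def)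

setup_lifting type_definition_bop

lemma bdd_add: "bdd_above (opvals M) \<Longrightarrow> bdd_above (opvals N) \<Longrightarrow> bdd_above (opvals (\<lambda>m k. M m k + N m k))"
  apply (rule bdd_opvalsI[where B="opnorm M + opnorm N"])
  apply (simp only: bil_add)
  apply (rule order_trans[OF norm_triangle_ineq add_mono])
  by (rule opvals_le; assumption)+

lemma bdd_scale: "bdd_above (opvals M) \<Longrightarrow> bdd_above (opvals (\<lambda>m k. c * M m k))"
  apply (rule bdd_opvalsI[where B="cmod c * opnorm M"])
  apply (simp only: bil_scale norm_mult)
  by (simp add: mult_left_mono opvals_le)

lemma bdd_uminus: "bdd_above (opvals M) \<Longrightarrow> bdd_above (opvals (\<lambda>m k. - M m k))"
  using bdd_scale[of M "-1"] by simp

instantiation bop :: (finite) real_vector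
begin
lift_definition zero_bop :: "'a bop" is "\<lambda>_ _. 0"
  by (auto intro!: bdd_opvalsI[where B=0] simp: bil_def)
lift_definition plus_bop :: "'a bop \<Rightarrow> 'a bop \<Rightarrow> 'a bop" is "\<lambda>M N m k. M m k + N m k"
  by (rule bdd_add)
lift_definition uminus_bop :: "'a bop \<Rightarrow> 'a bop" is "\<lambda>M m k. - M m k"
  by (rule bdd_uminus)
lift_definition minus_bop :: "'a bop \<Rightarrow> 'a bop \<Rightarrow> 'a bop" is "\<lambda>M N m k. M m k - N m k"
  subgoal for M N using bdd_add[of M "\<lambda>m k. - N m k"] bdd_uminus[of N] by simp
  done
lift_definition scaleR_bop :: "real \<Rightarrow> 'a bop \<Rightarrow> 'a bop" is "\<lambda>r M m k. complex_of_real r * M m k"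
  by (rule bdd_scale)
instance
  apply standard
  apply (transfer, simp add: fun_eq_iff add.assoc)
  apply (transfer, simp add: fun_eq_iff add.commute)
  apply (transfer, simp add: fun_eq_iff)
  apply (transfer, simp add: fun_eq_iff)
  apply (transfer, simp add: fun_eq_iff)
  apply (transfer, simp add: fun_eq_iff distrib_left)
  apply (transfer, simp add: fun_eq_iff distrib_right)
  apply (transfer, simp add: fun_eq_iff)
  apply (transfer, simp add: fun_eq_iff)
  done
end

lemma opnorm_scale_le: "bdd_above (opvals N) \<Longrightarrow> opnorm (\<lambda>m k. c * N m k) \<le> cmod c * opnorm N"
  by (rule opnorm_le, simp only: bil_scale norm_mult) (simp add: mult_left_mono opvals_le)

lemma opnorm_uminus: "opnorm (\<lambda>m k. - M m k) = opnorm M"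
  by (simp add: opnorm_def opvals_def bil_uminus)

instantiation bop :: (finite) real_normed_vector
begin
lift_definition norm_bop :: "'a bop \<Rightarrow> real" is opnorm .
definition dist_bop :: "'a bop \<Rightarrow> 'a bop \<Rightarrow> real" where "dist_bop x y = norm (x - y)"
definition sgn_bop :: "'a bop \<Rightarrow> 'a bop" where "sgn_bop x = x /\<^sub>R norm x"
definition uniformity_bop :: "('a bop \<times> 'a bop) filter"
  where "uniformity_bop = (INF e\<in>{0 <..}. principal {(x, y). dist x y < e})"
definition open_bop :: "'a bop set \<Rightarrow> bool"
  where "open_bop S = (\<forall>x\<in>S. \<forall>\<^sub>F (x', y) in uniformity. x' = x \<longrightarrow> y \<in> S)"
instance
proof
  fix x y :: "'a bop" and a :: real
  show "(norm x = 0) = (x = 0)"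
  proof transfer
    fix M :: "'a idx \<Rightarrow> 'a idx \<Rightarrow> complex"
    assume b: "bdd_above (opvals M)"
    show "(opnorm M = 0) = (M = (\<lambda>_ _. 0))"
    proof
      assume "opnorm M = 0"
      show "M = (\<lambda>_ _. 0)"
      proof (rule ccontr)
        assume "M \<noteq> (\<lambda>_ _. 0)"
        then obtain m0 k0 where nz: "M m0 k0 \<noteq> 0" by (auto simp: fun_eq_iff)
        let ?dk = "\<lambda>x. if x = k0 then (1::complex) else 0"
        let ?dm = "\<lambda>x. if x = m0 then (1::complex) else 0"
        have s1: "{x. ?dk x \<noteq> 0} = {k0}" "{x. ?dm x \<noteq> 0} = {m0}" by auto
        have "bil M ?dk ?dm = M m0 k0" unfolding bil_def s1 by simp
        moreover have "cmod (bil M ?dk ?dm) \<le> opnorm M"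
          by (rule opvals_le[OF b]) (simp_all add: fsupp_def l2fin_def s1)
        ultimately show False using nz \<open>opnorm M = 0\<close> by simp
      qed
    next
      assume "M = (\<lambda>_ _. 0)"
      then show "opnorm M = 0"
        using b by (auto intro!: antisym opnorm_le opnorm_nonneg simp: bil_def)
    qed
  qed
  show "norm (x + y) \<le> norm x + norm y"
    apply transfer
    apply (rule opnorm_le)
    apply (simp only: bil_add)
    apply (rule order_trans[OF norm_triangle_ineq add_mono])
    by (rule opvals_le; assumption)+
  show "norm (a *\<^sub>R x) = \<bar>a\<bar> * norm x"
  proof transfer
    fix M :: "'a idx \<Rightarrow> 'a idx \<Rightarrow> complex" and a :: real
    assume b: "bdd_above (opvals M)"
    have le1: "opnorm (\<lambda>m k. complex_of_real a * M m k) \<le> \<bar>a\<bar> * opnorm M" for a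
      by (rule opnorm_le, simp only: bil_scale norm_mult)
         (simp add: mult_left_mono opvals_le[OF b])
    show "opnorm (\<lambda>m k. complex_of_real a * M m k) = \<bar>a\<bar> * opnorm M"
    proof (cases "a = 0")
      case True then show ?thesis
        using le1[of 0] opnorm_nonneg[OF bdd_scale[OF b, of 0]] by simp
    next
      case False
      have "opnorm M = opnorm (\<lambda>m k. complex_of_real (inverse a) * (complex_of_real a * M m k))"
        using False by (simp add: mult.assoc[symmetric] of_real_mult[symmetric])
      also have "\<dots> \<le> \<bar>inverse a\<bar> * opnorm (\<lambda>m k. complex_of_real a * M m k)"
        using opnorm_scale_le[OF bdd_scale[OF b], of "complex_of_real (inverse a)" "complex_of_real a"]
        by (simp add: norm_inverse)
      finally have "\<bar>a\<bar> * opnorm M \<le> opnorm (\<lambda>m k. complex_of_real a * M m k)"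
        using False by (simp add: field_simps)
      with le1[of a] show ?thesis by simp
    qed
  qed
qed (fact dist_bop_def sgn_bop_def uniformity_bop_def open_bop_def)+
end


lift_definition cscale :: "complex \<Rightarrow> 'n::finite bop \<Rightarrow> 'n bop" is "\<lambda>c M m k. c * M m k"
  by (rule bdd_scale)

definition rvec :: "int^'n::finite \<Rightarrow> real^'n" where
  "rvec k = (\<chi> i. real_of_int (k $ i))"

text \<open>U^k U^l = cocyc k l U^(k+l) for U^k = U_1^k_1 ... U_n^k_n, where U_j U_i = e^(2 i pi theta_ij) U_i U_j
  (the indices are ordered by the linear order of the index type).\<close>
definition cocyc :: "real^('n::{finite,linorder})^('n::{finite,linorder}) \<Rightarrow> int^('n::{finite,linorder}) \<Rightarrow> int^('n::{finite,linorder}) \<Rightarrow> complex" where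
  "cocyc \<theta> k l = cis (2 * pi * (\<Sum>p\<in>{p. fst p < snd p}.
       \<theta> $ fst p $ snd p * real_of_int (k $ snd p) * real_of_int (l $ fst p)))"

text \<open>The monomial U^k, acting on H_theta = l2(Z^n) by left multiplication: U^k delta_l = cocyc k l delta_(k+l).\<close>
definition Umon :: "real^('n::{finite,linorder})^('n::{finite,linorder}) \<Rightarrow> int^('n::{finite,linorder}) \<Rightarrow> ('n::{finite,linorder}) bop" where
  "Umon \<theta> k = Abs_bop (\<lambda>m l. if m = k + l then cocyc \<theta> k l else 0)"

definition Atheta :: "real^('n::{finite,linorder})^('n::{finite,linorder}) \<Rightarrow> ('n::{finite,linorder}) bop set" where
  "Atheta \<theta> = closure {(\<Sum>k\<in>S. cscale (a k) (Umon \<theta> k)) | a S. finite S}"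

text \<open>Matrix of delta^alpha u, where delta_j(U^k) = k_j U^k.\<close>
definition dmat :: "nat^'n \<Rightarrow> (int^'n \<Rightarrow> int^'n \<Rightarrow> complex) \<Rightarrow> (int^'n::finite \<Rightarrow> int^'n \<Rightarrow> complex)" where
  "dmat \<alpha> M m k = (\<Prod>j\<in>UNIV. of_int ((m - k) $ j) ^ (\<alpha> $ j)) * M m k"

definition delta :: "nat^'n \<Rightarrow> 'n::finite bop \<Rightarrow> 'n bop" where
  "delta \<alpha> u = Abs_bop (dmat \<alpha> (Rep_bop u))"

definition Asmooth :: "real^('n::{finite,linorder})^('n::{finite,linorder}) \<Rightarrow> ('n::{finite,linorder}) bop set" where
  "Asmooth \<theta> = {u \<in> Atheta \<theta>. \<forall>\<alpha>. \<exists>v\<in>Atheta \<theta>. Rep_bop v = dmat \<alpha> (Rep_bop u)}"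

definition mult :: "'n::finite bop \<Rightarrow> 'n bop \<Rightarrow> 'n bop" where
  "mult u v = Abs_bop (\<lambda>m k. \<Sum>\<^sub>\<infinity>l. Rep_bop u m l * Rep_bop v l k)"

definition adj :: "'n::finite bop \<Rightarrow> 'n bop" where
  "adj u = Abs_bop (\<lambda>m k. cnj (Rep_bop u k m))"

definition tau :: "'n::finite bop \<Rightarrow> complex" where
  "tau u = Rep_bop u 0 0"

text \<open>Fourier coefficient u_k of u = sum u_k U^k.\<close>
definition coef :: "'n::finite bop \<Rightarrow> int^'n \<Rightarrow> complex" where
  "coef u k = Rep_bop u k 0"

definition hinner :: "'n::finite bop \<Rightarrow> 'n bop \<Rightarrow> complex" where
  "hinner u v = tau (mult u (adj v))"

definition mabs :: "nat^'n::finite \<Rightarrow> nat" where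
  "mabs \<beta> = (\<Sum>i\<in>UNIV. \<beta> $ i)"

text \<open>f : S \<rightarrow> smooth algebra is smooth (for the Frechet topology given by the seminorms
  norm (delta^alpha u)), with D beta the partial derivative d_xi^beta f.\<close>
definition fsmooth :: "real^('n::{finite,linorder})^('n::{finite,linorder}) \<Rightarrow> (real^('n::{finite,linorder})) set \<Rightarrow> (real^('n::{finite,linorder}) \<Rightarrow> ('n::{finite,linorder}) bop)
    \<Rightarrow> (nat^('n::{finite,linorder}) \<Rightarrow> real^('n::{finite,linorder}) \<Rightarrow> ('n::{finite,linorder}) bop) \<Rightarrow> bool" where
  "fsmooth \<theta> S f D \<longleftrightarrow>
     (\<forall>\<xi>\<in>S. D 0 \<xi> = f \<xi>) \<and>
     (\<forall>\<beta>. \<forall>\<xi>\<in>S. D \<beta> \<xi> \<in> Asmooth \<theta>) \<and>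
     (\<forall>\<alpha> \<beta>. continuous_on S (\<lambda>\<xi>. delta \<alpha> (D \<beta> \<xi>))) \<and>
     (\<forall>\<alpha> \<beta> j. \<forall>\<xi>\<in>S.
        ((\<lambda>t. delta \<alpha> (D \<beta> (\<xi> + t *\<^sub>R axis j (1::real)))) has_vector_derivative
            delta \<alpha> (D (\<beta> + axis j (1::nat)) \<xi>)) (at 0))"

definition homsymb :: "real^('n::{finite,linorder})^('n::{finite,linorder}) \<Rightarrow> complex \<Rightarrow> (real^('n::{finite,linorder}) \<Rightarrow> ('n::{finite,linorder}) bop)
    \<Rightarrow> (nat^('n::{finite,linorder}) \<Rightarrow> real^('n::{finite,linorder}) \<Rightarrow> ('n::{finite,linorder}) bop) \<Rightarrow> bool" where
  "homsymb \<theta> p g G \<longleftrightarrow> fsmooth \<theta> (UNIV - {0}) g G \<and>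
     (\<forall>\<xi> t. \<xi> \<noteq> 0 \<longrightarrow> 0 < t \<longrightarrow> g (t *\<^sub>R \<xi>) = cscale (complex_of_real t powr p) (g \<xi>))"

definition Sq :: "real^('n::{finite,linorder})^('n::{finite,linorder}) \<Rightarrow> complex \<Rightarrow> (real^('n::{finite,linorder}) \<Rightarrow> ('n::{finite,linorder}) bop) set" where
  "Sq \<theta> q = {\<rho>. \<exists>D. fsmooth \<theta> UNIV \<rho> D \<and>
     (\<exists>h H. (\<forall>j. homsymb \<theta> (q - of_nat j) (h j) (H j)) \<and>
        (\<forall>N \<alpha> \<beta>. \<exists>C. \<forall>\<xi>. 1 \<le> norm \<xi> \<longrightarrow>
            norm (delta \<alpha> (D \<beta> \<xi> - (\<Sum>j<N. H j \<beta> \<xi>)))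
              \<le> C * norm \<xi> powr (Re q - real N - real (mabs \<beta>))))}"

definition Prho :: "real^('n::{finite,linorder})^('n::{finite,linorder}) \<Rightarrow> (real^('n::{finite,linorder}) \<Rightarrow> ('n::{finite,linorder}) bop) \<Rightarrow> ('n::{finite,linorder}) bop \<Rightarrow> ('n::{finite,linorder}) bop" where
  "Prho \<theta> \<rho> u = (\<Sum>\<^sub>\<infinity>k. cscale (coef u k) (mult (\<rho> (rvec k)) (Umon \<theta> k)))"

definition Psi :: "real^('n::{finite,linorder})^('n::{finite,linorder}) \<Rightarrow> complex \<Rightarrow> (('n::{finite,linorder}) bop \<Rightarrow> ('n::{finite,linorder}) bop) set" where
  "Psi \<theta> q = {P. \<exists>\<rho>\<in>Sq \<theta> q. \<forall>u\<in>Asmooth \<theta>. P u = Prho \<theta> \<rho> u}"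

definition Trace :: "real^('n::{finite,linorder})^('n::{finite,linorder}) \<Rightarrow> (('n::{finite,linorder}) bop \<Rightarrow> ('n::{finite,linorder}) bop) \<Rightarrow> complex" where
  "Trace \<theta> P = (\<Sum>\<^sub>\<infinity>k. hinner (P (Umon \<theta> k)) (Umon \<theta> k))"

definition normalized :: "(real^'n \<Rightarrow> 'n::finite bop) \<Rightarrow> bool" where
  "normalized \<rho> \<longleftrightarrow> integral UNIV \<rho> = (\<Sum>\<^sub>\<infinity>k. \<rho> (rvec k))"

end

theory Submission
  imports Defs
begin


lemma l2fin_sq: "l2fin f \<le> 1 \<Longrightarrow> (\<Sum>k\<in>{k. f k \<noteq> 0}. (cmod (f k))\<^sup>2) \<le> 1"
  unfolding l2fin_def by (metis real_sqrt_le_1_iff)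

lemma entry_le: assumes b: "bdd_above (opvals M)" shows "cmod (M m0 k0) \<le> opnorm M"
proof -
  let ?dk = "\<lambda>x. if x = k0 then (1::complex) else 0"
  let ?dm = "\<lambda>x. if x = m0 then (1::complex) else 0"
  have s1: "{x. ?dk x \<noteq> 0} = {k0}" "{x. ?dm x \<noteq> 0} = {m0}" by auto
  have "bil M ?dk ?dm = M m0 k0" unfolding bil_def s1 by simp
  moreover have "cmod (bil M ?dk ?dm) \<le> opnorm M"
    by (rule opvals_le[OF b]) (simp_all add: fsupp_def l2fin_def s1)
  ultimately show ?thesis by simp
qed

lemma Rep_bop_bdd: "bdd_above (opvals (Rep_bop x))"
  using Rep_bop by auto

lemma norm_bop_eq: "norm x = opnorm (Rep_bop x)"
  by (simp add: norm_bop.rep_eq)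

lemma entry_le_norm: "cmod (Rep_bop x m k) \<le> norm x"
  using entry_le[OF Rep_bop_bdd] norm_bop_eq by metis

lemma bil_diff: "bil (\<lambda>m k. M m k - N m k) f g = bil M f g - bil N f g"
  by (simp add: bil_def sum_subtractf ring_distribs)

lemma id_bdd: "bdd_above (opvals (\<lambda>m k::'a. if m = k then (1::complex) else 0))"
proof (rule bdd_opvalsI[where B=1])
  fix f g :: "'a \<Rightarrow> complex"
  assume ff: "fsupp f" and fg: "fsupp g" and lf: "l2fin f \<le> 1" and lg: "l2fin g \<le> 1"
  let ?F = "{k. f k \<noteq> 0}" and ?G = "{k. g k \<noteq> 0}"
  have fin: "finite ?F" "finite ?G" using ff fg by (auto simp: fsupp_def)
  have "bil (\<lambda>m k. if m = k then 1 else 0) f g = (\<Sum>m\<in>?G. if m \<in> ?F then cnj (g m) * f m else 0)"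
    unfolding bil_def
  proof (rule sum.cong[OF refl])
    fix m
    have eq: "(\<lambda>k. cnj (g m) * (if m = k then 1 else 0) * f k) = (\<lambda>k. if m = k then cnj (g m) * f m else 0)"
      by auto
    show "(\<Sum>k\<in>?F. cnj (g m) * (if m = k then 1 else 0) * f k) = (if m \<in> ?F then cnj (g m) * f m else 0)"
      unfolding eq by (rule sum.delta'[OF fin(1)])
  qed
  also have "\<dots> = (\<Sum>m\<in>?G \<inter> ?F. cnj (g m) * f m)"
    using fin by (simp add: sum.inter_restrict)
  finally have e: "bil (\<lambda>m k. if m = k then 1 else 0) f g = (\<Sum>m\<in>?G \<inter> ?F. cnj (g m) * f m)" .
  have "cmod (\<Sum>m\<in>?G \<inter> ?F. cnj (g m) * f m) \<le> (\<Sum>m\<in>?G \<inter> ?F. cmod (g m) * cmod (f m))"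
    by (rule order_trans[OF norm_sum]) (simp add: norm_mult)
  also have "\<dots> \<le> (\<Sum>m\<in>?G \<inter> ?F. ((cmod (g m))\<^sup>2 + (cmod (f m))\<^sup>2) / 2)"
  proof (rule sum_mono)
    fix m
    have "2 * (cmod (g m) * cmod (f m)) \<le> (cmod (g m))\<^sup>2 + (cmod (f m))\<^sup>2"
      using sum_squares_bound[of "cmod (g m)" "cmod (f m)"] by (simp add: mult.assoc)
    then show "cmod (g m) * cmod (f m) \<le> ((cmod (g m))\<^sup>2 + (cmod (f m))\<^sup>2) / 2" by simp
  qed
  also have "\<dots> = ((\<Sum>m\<in>?G \<inter> ?F. (cmod (g m))\<^sup>2) + (\<Sum>m\<in>?G \<inter> ?F. (cmod (f m))\<^sup>2)) / 2"
    by (simp only: sum_divide_distrib[symmetric] sum.distrib)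
  also have "\<dots> \<le> ((\<Sum>m\<in>?G. (cmod (g m))\<^sup>2) + (\<Sum>m\<in>?F. (cmod (f m))\<^sup>2)) / 2"
    using fin by (intro divide_right_mono add_mono sum_mono2) auto
  also have "\<dots> \<le> 1" using l2fin_sq[OF lf] l2fin_sq[OF lg] by simp
  finally show "cmod (bil (\<lambda>m k. if m = k then 1 else 0) f g) \<le> 1" using e by simp
qed

lemma shift_bdd:
  fixes A :: "'a::ab_group_add \<Rightarrow> 'a \<Rightarrow> complex"
  assumes b: "bdd_above (opvals A)" and ph: "\<And>j. cmod (\<phi> j) = 1"
  shows "bdd_above (opvals (\<lambda>m j. A m (j + a) * \<phi> j))"
proof (rule bdd_opvalsI[where B="opnorm A"])
  fix f g :: "'a \<Rightarrow> complex"
  assume ff: "fsupp f" and fg: "fsupp g" and lf: "l2fin f \<le> 1" and lg: "l2fin g \<le> 1"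
  define f' where "f' l = \<phi> (l - a) * f (l - a)" for l
  have nz: "\<phi> j \<noteq> 0" for j using ph[of j] by auto
  have S: "{l. f' l \<noteq> 0} = (\<lambda>j. j + a) ` {j. f j \<noteq> 0}"
    by (auto simp: f'_def nz image_iff) (metis diff_add_cancel)
  have inj: "inj_on (\<lambda>j. j + a) X" for X by (auto simp: inj_on_def)
  have ff': "fsupp f'" using ff unfolding fsupp_def S by simp
  have "(\<Sum>k\<in>{k. f' k \<noteq> 0}. (cmod (f' k))\<^sup>2) = (\<Sum>k\<in>{k. f k \<noteq> 0}. (cmod (f k))\<^sup>2)"
    unfolding S by (subst sum.reindex[OF inj]) (simp add: f'_def norm_mult ph)
  then have lf': "l2fin f' \<le> 1" using lf by (simp add: l2fin_def)
  have "bil (\<lambda>m j. A m (j + a) * \<phi> j) f g = bil A f' g"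
    unfolding bil_def S
    by (rule sum.cong[OF refl], subst sum.reindex[OF inj]) (simp add: f'_def mult.assoc mult.left_commute)
  then show "cmod (bil (\<lambda>m j. A m (j + a) * \<phi> j) f g) \<le> opnorm A"
    using opvals_le[OF b ff' fg lf' lg] by simp
qed

lemma Rep_minus: "Rep_bop (x - y) = (\<lambda>m k. Rep_bop x m k - Rep_bop y m k)"
  by (simp add: minus_bop.rep_eq)

lemma bil_Rep_le: "fsupp f \<Longrightarrow> fsupp g \<Longrightarrow> l2fin f \<le> 1 \<Longrightarrow> l2fin g \<le> 1 \<Longrightarrow> cmod (bil (Rep_bop x) f g) \<le> norm x"
  using opvals_le[OF Rep_bop_bdd] norm_bop_eq by metis

instance bop :: (finite) complete_space
proof
  fix X :: "nat \<Rightarrow> 'a bop" assume C: "Cauchy X"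
  have Ce: "\<exists>N. \<forall>i\<ge>N. \<forall>j\<ge>N. norm (X i - X j) < e" if "e > 0" for e
    using C that unfolding Cauchy_def dist_norm by blast
  have "Cauchy (\<lambda>i. Rep_bop (X i) m k)" for m k
  proof (rule CauchyI)
    fix e :: real assume "e > 0"
    then obtain N where N: "\<forall>i\<ge>N. \<forall>j\<ge>N. norm (X i - X j) < e" using Ce by blast
    show "\<exists>M. \<forall>i\<ge>M. \<forall>j\<ge>M. norm (Rep_bop (X i) m k - Rep_bop (X j) m k) < e"
    proof (intro exI allI impI)
      fix i j assume "N \<le> i" "N \<le> j"
      then show "norm (Rep_bop (X i) m k - Rep_bop (X j) m k) < e"
        using entry_le_norm[of "X i - X j" m k] N \<open>N \<le> i\<close> \<open>N \<le> j\<close>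
        by (simp add: Rep_minus) (meson order_le_less_trans)
    qed
  qed
  then have "convergent (\<lambda>i. Rep_bop (X i) m k)" for m k
    by (simp add: Cauchy_convergent_iff)
  then obtain L where L: "\<And>m k. (\<lambda>i. Rep_bop (X i) m k) \<longlonglongrightarrow> L m k"
    unfolding convergent_def by metis
  have bl: "(\<lambda>i. bil (Rep_bop (X i)) f g) \<longlonglongrightarrow> bil L f g" for f g
    unfolding bil_def by (intro tendsto_intros L)
  obtain B where B: "\<And>i. norm (X i) \<le> B"
    using Cauchy_Bseq[OF C] by (auto simp: Bseq_def)
  have Lb: "bdd_above (opvals L)"
  proof (rule bdd_opvalsI[where B=B])
    fix f g :: "'a idx \<Rightarrow> complex"
    assume h: "fsupp f" "fsupp g" "l2fin f \<le> 1" "l2fin g \<le> 1"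
    show "cmod (bil L f g) \<le> B"
      by (rule LIMSEQ_le_const2[OF tendsto_norm[OF bl]]) (use bil_Rep_le[OF h] B order_trans in blast)
  qed
  define x where "x = Abs_bop L"
  have Rx: "Rep_bop x = L" unfolding x_def using Lb by (simp add: Abs_bop_inverse)
  have "X \<longlonglongrightarrow> x"
  proof (rule LIMSEQ_I)
    fix r :: real assume r: "0 < r"
    then obtain N where N: "\<forall>i\<ge>N. \<forall>j\<ge>N. norm (X i - X j) < r / 2" using Ce[of "r/2"] by auto
    show "\<exists>no. \<forall>n\<ge>no. norm (X n - x) < r"
    proof (intro exI allI impI)
      fix i assume i: "N \<le> i"
      have "norm (X i - x) \<le> r / 2"
        unfolding norm_bop_eq Rep_minus Rx
      proof (rule opnorm_le)
        fix f g :: "'a idx \<Rightarrow> complex"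
        assume h: "fsupp f" "fsupp g" "l2fin f \<le> 1" "l2fin g \<le> 1"
        have t: "(\<lambda>j. bil (Rep_bop (X i - X j)) f g) \<longlonglongrightarrow> bil (\<lambda>m k. Rep_bop (X i) m k - L m k) f g"
          unfolding Rep_minus bil_diff by (intro tendsto_intros bl)
        show "cmod (bil (\<lambda>m k. Rep_bop (X i) m k - L m k) f g) \<le> r / 2"
        proof (rule LIMSEQ_le_const2[OF tendsto_norm[OF t]], rule exI[of _ N], intro allI impI)
          fix j assume "N \<le> j"
          then show "cmod (bil (Rep_bop (X i - X j)) f g) \<le> r / 2"
            using bil_Rep_le[OF h, of "X i - X j"] N i by fastforce
        qed
      qed
      then show "norm (X i - x) < r" using r by simp
    qed
  qed
  then show "convergent X" unfolding convergent_def by blast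
qed

instance bop :: (finite) banach ..



lemma infsum_pt:
  fixes f :: "'a \<Rightarrow> 'b::{comm_monoid_add, t2_space}"
  assumes "\<And>x. x \<noteq> a \<Longrightarrow> f x = 0"
  shows "infsum f UNIV = f a"
proof -
  have "infsum f UNIV = infsum f {a}"
    by (rule infsum_cong_neutral) (use assms in auto)
  then show ?thesis by simp
qed

lemma cocyc_norm: "cmod (cocyc \<theta> k l) = 1"
  by (simp add: cocyc_def)

lemma cocyc_0: "cocyc \<theta> k 0 = 1"
  by (simp add: cocyc_def)

lemma cocyc_cnj: "cocyc \<theta> k l * cnj (cocyc \<theta> k l) = 1"
  using complex_norm_square[of "cocyc \<theta> k l"] cocyc_norm[of \<theta> k l] by simp

definition Imat :: "'a \<Rightarrow> 'a \<Rightarrow> complex" where "Imat m j = (if m = j then 1 else 0)"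

lemma Umon_mat: "(\<lambda>m l. if m = k + l then cocyc \<theta> k l else 0) = (\<lambda>m l. Imat m (l + k) * cocyc \<theta> k l)"
  by (auto simp: fun_eq_iff Imat_def add.commute)

lemma Rep_Umon: "Rep_bop (Umon \<theta> k) = (\<lambda>m l. if m = k + l then cocyc \<theta> k l else 0)"
  unfolding Umon_def Umon_mat
  by (rule Abs_bop_inverse, simp, rule shift_bdd[OF id_bdd[folded Imat_def] cocyc_norm])

lemma Rep_mult_Umon: "Rep_bop (mult x (Umon \<theta> k)) = (\<lambda>m j. Rep_bop x m (j + k) * cocyc \<theta> k j)"
proof -
  have e: "(\<lambda>m j. \<Sum>\<^sub>\<infinity>l. Rep_bop x m l * Rep_bop (Umon \<theta> k) l j) = (\<lambda>m j. Rep_bop x m (j + k) * cocyc \<theta> k j)"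
    unfolding Rep_Umon
    by (rule ext, rule ext, subst infsum_pt[where a="j + k" for j]) (auto simp: add.commute)
  show ?thesis
    unfolding mult_def e
    by (rule Abs_bop_inverse, simp, rule shift_bdd[OF Rep_bop_bdd cocyc_norm])
qed

lemma Rep_adj_Umon: "Rep_bop (adj (Umon \<theta> k)) = (\<lambda>m j. Imat m (j + - k) * cnj (cocyc \<theta> k (j - k)))"
proof -
  have e: "(\<lambda>m j. cnj (Rep_bop (Umon \<theta> k) j m)) = (\<lambda>m j. Imat m (j + - k) * cnj (cocyc \<theta> k (j - k)))"
    unfolding Rep_Umon Imat_def by (auto simp: fun_eq_iff)
  show ?thesis
    unfolding adj_def e
    by (rule Abs_bop_inverse, simp, rule shift_bdd[OF id_bdd[folded Imat_def], where \<phi>="\<lambda>j. cnj (cocyc \<theta> k (j - k))" and a="-k", simplified]) (simp add: cocyc_norm)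
qed

lemma Rep_mult_adj_Umon: "Rep_bop (mult x (adj (Umon \<theta> k))) = (\<lambda>m j. Rep_bop x m (j + - k) * cnj (cocyc \<theta> k (j - k)))"
proof -
  have e: "(\<lambda>m j. \<Sum>\<^sub>\<infinity>l. Rep_bop x m l * Rep_bop (adj (Umon \<theta> k)) l j) = (\<lambda>m j. Rep_bop x m (j + - k) * cnj (cocyc \<theta> k (j - k)))"
    unfolding Rep_adj_Umon
    by (rule ext, rule ext, subst infsum_pt[where a="j + - k" for j]) (auto simp: Imat_def)
  show ?thesis
    unfolding mult_def e
    by (rule Abs_bop_inverse, simp, rule shift_bdd[OF Rep_bop_bdd, where \<phi>="\<lambda>j. cnj (cocyc \<theta> k (j - k))" and a="-k", simplified]) (simp add: cocyc_norm)
qed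

lemma hinner_mult_Umon: "hinner (mult x (Umon \<theta> k)) (Umon \<theta> k) = tau x"
  unfolding hinner_def tau_def Rep_mult_adj_Umon Rep_mult_Umon
  using cocyc_cnj[of \<theta> k "-k"] by (simp add: mult.assoc)

lemma Rep_cscale: "Rep_bop (cscale c x) = (\<lambda>m k. c * Rep_bop x m k)"
  by (simp add: cscale.rep_eq)

lemma cscale_1: "cscale 1 x = x"
  by (simp add: Rep_bop_inject[symmetric] Rep_cscale)

lemma cscale_0: "cscale 0 x = 0"
  by (simp add: Rep_bop_inject[symmetric] Rep_cscale zero_bop.rep_eq)

lemma Umon_Atheta: "Umon \<theta> k \<in> Atheta \<theta>"
proof -
  have "\<exists>a S. Umon \<theta> k = (\<Sum>k\<in>S. cscale (a k) (Umon \<theta> k)) \<and> finite S"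
    by (rule exI[of _ "\<lambda>_. 1"], rule exI[of _ "{k}"]) (simp add: cscale_1)
  then have "Umon \<theta> k \<in> {(\<Sum>k\<in>S. cscale (a k) (Umon \<theta> k)) | a S. finite S}" by simp
  then show ?thesis unfolding Atheta_def by (rule subsetD[OF closure_subset])
qed

lemma cscale_Atheta: "cscale c (Umon \<theta> k) \<in> Atheta \<theta>"
proof -
  have "\<exists>a S. cscale c (Umon \<theta> k) = (\<Sum>k\<in>S. cscale (a k) (Umon \<theta> k)) \<and> finite S"
    by (rule exI[of _ "\<lambda>_. c"], rule exI[of _ "{k}"]) simp
  then have "cscale c (Umon \<theta> k) \<in> {(\<Sum>k\<in>S. cscale (a k) (Umon \<theta> k)) | a S. finite S}" by simp
  then show ?thesis unfolding Atheta_def by (rule subsetD[OF closure_subset])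
qed

lemma Umon_Asmooth: "Umon \<theta> k \<in> Asmooth \<theta>"
  unfolding Asmooth_def
proof (intro CollectI conjI allI Umon_Atheta)
  fix \<alpha>
  let ?c = "(\<Prod>j\<in>UNIV. of_int (k $ j) ^ (\<alpha> $ j)) :: complex"
  have "Rep_bop (cscale ?c (Umon \<theta> k)) = dmat \<alpha> (Rep_bop (Umon \<theta> k))"
    unfolding Rep_cscale Rep_Umon dmat_def
  proof (intro ext)
    fix m l
    show "?c * (if m = k + l then cocyc \<theta> k l else 0) =
      (\<Prod>j\<in>UNIV. of_int ((m - l) $ j) ^ (\<alpha> $ j)) * (if m = k + l then cocyc \<theta> k l else 0)"
    proof (cases "m = k + l")
      case True
      then have "m - l = k" by simp
      then show ?thesis using True by simp
    qed simp
  qed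
  then show "\<exists>v\<in>Atheta \<theta>. Rep_bop v = dmat \<alpha> (Rep_bop (Umon \<theta> k))"
    using cscale_Atheta by blast
qed

lemma Prho_Umon: "Prho \<theta> \<rho> (Umon \<theta> k) = mult (\<rho> (rvec k)) (Umon \<theta> k)"
  unfolding Prho_def
  by (subst infsum_pt[where a=k]) (auto simp: coef_def Rep_Umon cocyc_0 cscale_1 cscale_0)



definition f1 :: "real \<Rightarrow> real \<Rightarrow> real" where "f1 t y = (max 1 \<bar>y\<bar>) powr (-t)"

lemma f1_nonneg: "0 \<le> f1 t y" by (simp add: f1_def)
lemma f1_pos: "0 < f1 t y" by (simp add: f1_def)
lemma f1_even: "f1 t (-y) = f1 t y" by (simp add: f1_def)

lemma f1_cont: "continuous_on A (f1 t)"
  unfolding f1_def by (intro continuous_intros) auto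

lemma f1_int_pos:
  assumes t: "t > 1" shows "f1 t integrable_on {1..}"
proof -
  have "((\<lambda>x. x powr (-t)) has_integral -(1 powr (-t+1)) / (-t+1)) {1..}"
    by (rule has_integral_powr_to_inf) (use t in auto)
  then have "(f1 t has_integral -(1 powr (-t+1)) / (-t+1)) {1..}"
    by (rule has_integral_eq[rotated]) (simp add: f1_def)
  then show ?thesis by blast
qed

lemma f1_int_neg:
  assumes t: "t > 1" shows "f1 t integrable_on {..-1}"
proof -
  have a: "f1 t absolutely_integrable_on {1..}"
    by (rule nonnegative_absolutely_integrable_1[OF f1_int_pos[OF t]]) (simp add: f1_nonneg)
  have "(\<lambda>x. f1 t (-x)) absolutely_integrable_on {..-1} \<and> integral {..-1} (\<lambda>x. f1 t (-x)) = integral {1..} (f1 t)"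
    by (subst has_absolute_integral_reflect_real[where B="{1..}"]) (use a in \<open>auto simp: image_def\<close>)
  then have "(\<lambda>x. f1 t (-x)) integrable_on {..-1}"
    using set_lebesgue_integral_eq_integral(1) by (auto simp: absolutely_integrable_on_def)
  then show ?thesis by (simp add: f1_even)
qed

lemma f1_int:
  assumes t: "t > 1" shows "f1 t integrable_on UNIV"
proof -
  have m: "f1 t integrable_on {-1..1}"
    by (rule integrable_continuous_interval[OF f1_cont])
  have r: "f1 t integrable_on ({-1..1} \<union> {1..})"
    by (rule integrable_Un[OF _ m f1_int_pos[OF t]]) (rule negligible_subset[of "{1}"], auto)
  have "f1 t integrable_on ({..-1} \<union> ({-1..1} \<union> {1..}))"
    by (rule integrable_Un[OF _ f1_int_neg[OF t] r]) (rule negligible_subset[of "{-1}"], auto)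
  moreover have "{..-1} \<union> ({-1..1} \<union> {1..}) = (UNIV::real set)" by auto
  ultimately show ?thesis by simp
qed

lemma f1_borel: "f1 t \<in> borel_measurable borel"
  by (rule borel_measurable_continuous_onI[OF f1_cont])

lemma f1_nn_fin:
  assumes t: "t > 1" shows "(\<integral>\<^sup>+x. ennreal (f1 t x) \<partial>lborel) < \<infinity>"
proof -
  have "(\<integral>\<^sup>+x. ennreal (f1 t x) \<partial>lborel) = ennreal (integral UNIV (f1 t))"
    by (rule nn_integral_has_integral_lborel[OF f1_borel f1_nonneg]) (use f1_int[OF t] in blast)
  then show ?thesis by simp
qed

definition G :: "real \<Rightarrow> real^'n::finite \<Rightarrow> real" where "G t \<xi> = (\<Prod>i\<in>UNIV. f1 t (\<xi> $ i))"

lemma G_nonneg: "0 \<le> G t \<xi>" unfolding G_def by (intro prod_nonneg) (simp add: f1_nonneg)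

lemma prod_Basis_cart: "(\<Prod>b\<in>Basis. h (x \<bullet> b)) = (\<Prod>i\<in>UNIV. h ((x::real^'n::finite) $ i))"
proof -
  have B: "(Basis :: (real^'n) set) = (\<lambda>i. axis i 1) ` UNIV"
    unfolding Basis_vec_def by auto
  have inj: "inj (\<lambda>i::'n. axis i (1::real))" by (auto simp: inj_on_def axis_eq_axis)
  show ?thesis unfolding B by (subst prod.reindex[OF inj]) (simp add: inner_axis)
qed

lemma G_cont: "continuous_on A (G t)"
  unfolding G_def by (intro continuous_intros continuous_on_compose2[OF f1_cont]) auto

lemma G_integrable_lborel:
  assumes t: "t > 1" shows "integrable lborel (G t :: real^'n::finite \<Rightarrow> real)"
proof -
  have meas: "(G t :: real^'n \<Rightarrow> real) \<in> borel_measurable lborel"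
    using borel_measurable_continuous_onI[OF G_cont] by simp
  have "(\<integral>\<^sup>+x. ennreal (G t (x::real^'n)) \<partial>lborel) = (\<integral>\<^sup>+x. ennreal (\<Prod>b\<in>Basis. f1 t ((x::real^'n) \<bullet> b)) \<partial>lborel)"
  proof -
    have "G t x = (\<Prod>b\<in>Basis. f1 t (x \<bullet> b))" for x :: "real^'n"
      by (simp add: G_def prod_Basis_cart[of "f1 t"])
    then show ?thesis by simp
  qed
  also have "\<dots> = (\<integral>\<^sup>+x. (\<Prod>b\<in>(Basis::(real^'n) set). ennreal (f1 t (x \<bullet> b))) \<partial>lborel)"
    by (simp add: prod_ennreal f1_nonneg)
  also have "\<dots> = (\<Prod>b\<in>(Basis::(real^'n) set). (\<integral>\<^sup>+x. ennreal (f1 t x) \<partial>lborel))"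
    by (rule nn_integral_lborel_prod) (use f1_borel in auto)
  also have "\<dots> < \<infinity>"
    using f1_nn_fin[OF t] by (simp add: power_less_top_ennreal)
  finally have fin: "(\<integral>\<^sup>+x. ennreal (G t (x::real^'n)) \<partial>lborel) < \<infinity>" .
  have "(\<integral>\<^sup>+x. ennreal (norm (G t (x::real^'n))) \<partial>lborel) < \<infinity>"
    using fin by (simp add: abs_of_nonneg[OF G_nonneg])
  then show ?thesis using meas by (simp add: integrable_iff_bounded)
qed

lemma G_integrable: "t > 1 \<Longrightarrow> (G t :: real^'n::finite \<Rightarrow> real) integrable_on UNIV"
  using integrable_on_lborel[OF G_integrable_lborel] .



lemma f1_summable_nat: assumes t: "t > 1" shows "summable (\<lambda>n::nat. f1 t (real n))"
proof -
  have "summable (\<lambda>n::nat. real n powr (-t))"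
    using t by (simp add: summable_real_powr_iff)
  moreover have "eventually (\<lambda>n. f1 t (real n) = real n powr (-t)) sequentially"
    using eventually_ge_at_top[of "1::nat"] by eventually_elim (simp add: f1_def)
  ultimately show ?thesis using summable_cong[of "\<lambda>n. f1 t (real n)" "\<lambda>n. real n powr (-t)"] by simp
qed

lemma f1_summable_int: assumes t: "t > 1" shows "(\<lambda>m::int. f1 t (of_int m)) summable_on UNIV"
proof -
  have s: "(\<lambda>n::nat. f1 t (real n)) summable_on UNIV"
    using f1_summable_nat[OF t] by (simp add: summable_on_UNIV_nonneg_real_iff f1_nonneg)
  have i1: "inj (int)" by (simp add: inj_on_def)
  have i2: "inj (\<lambda>n::nat. - int n)" by (simp add: inj_on_def)
  have a: "(\<lambda>m::int. f1 t (of_int m)) summable_on range int"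
    by (subst summable_on_reindex[OF i1]) (simp add: o_def s)
  have b: "(\<lambda>m::int. f1 t (of_int m)) summable_on range (\<lambda>n::nat. - int n)"
    by (subst summable_on_reindex[OF i2]) (simp add: o_def s f1_even)
  have u: "range int \<union> range (\<lambda>n::nat. - int n) = UNIV"
  proof -
    have "m \<in> range int \<union> range (\<lambda>n::nat. - int n)" for m :: int
    proof (cases "m \<ge> 0")
      case True then have "m = int (nat m)" by simp
      then show ?thesis by blast
    next
      case False then have "m = - int (nat (-m))" by simp
      then show ?thesis by blast
    qed
    then show ?thesis by blast
  qed
  show ?thesis using summable_on_union[OF a b] unfolding u .
qed

lemma lattice_summable:
  assumes t: "t > 1"
  shows "(\<lambda>k::int^'n::finite. G t (rvec k)) summable_on UNIV"
proof -
  have old: "Infinite_Set_Sum.abs_summable_on (\<lambda>g::'n \<Rightarrow> int. \<Prod>i\<in>UNIV. f1 t (of_int (g i))) (PiE UNIV (\<lambda>_. UNIV))"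
  proof (rule abs_summable_on_prod_PiE)
    fix i :: 'n
    have "(\<lambda>m::int. norm (f1 t (of_int m))) summable_on UNIV"
      using f1_summable_int[OF t] by (simp add: abs_of_nonneg f1_nonneg)
    then show "Infinite_Set_Sum.abs_summable_on (\<lambda>m::int. f1 t (of_int m)) UNIV"
      by (rule abs_summable_equivalent[THEN iffD1])
  qed auto
  then have old': "Infinite_Set_Sum.abs_summable_on (\<lambda>g::'n \<Rightarrow> int. \<Prod>i\<in>UNIV. f1 t (of_int (g i))) UNIV"
    by simp
  have "(\<lambda>g::'n \<Rightarrow> int. norm (\<Prod>i\<in>UNIV. f1 t (of_int (g i)))) summable_on UNIV"
    by (rule abs_summable_equivalent[THEN iffD2, OF old'])
  then have s: "(\<lambda>g::'n \<Rightarrow> int. \<Prod>i\<in>UNIV. f1 t (of_int (g i))) summable_on UNIV"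
    by (simp add: abs_of_nonneg prod_nonneg f1_nonneg)
  have inj: "inj (vec_lambda :: ('n \<Rightarrow> int) \<Rightarrow> int^'n)"
  proof (rule injI)
    fix f g :: "'n \<Rightarrow> int" assume "vec_lambda f = vec_lambda g"
    then have "vec_lambda f $ i = vec_lambda g $ i" for i by simp
    then show "f = g" by (simp add: fun_eq_iff)
  qed
  have r: "range (vec_lambda :: ('n \<Rightarrow> int) \<Rightarrow> int^'n) = UNIV"
    by (metis surj_def vec_lambda_eta)
  have "(\<lambda>k::int^'n. G t (rvec k)) summable_on range vec_lambda"
    by (subst summable_on_reindex[OF inj]) (simp add: o_def G_def rvec_def s)
  then show ?thesis unfolding r .
qed

lemma G_lower:
  assumes t: "(t::real) \<ge> 0"
  shows "(1 + norm \<xi>) powr (-(t * real CARD('n))) \<le> G t (\<xi>::real^'n::finite)"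
proof -
  have "(\<Prod>i\<in>(UNIV::'n set). (1 + norm \<xi>) powr (-t)) \<le> G t \<xi>"
    unfolding G_def
  proof (rule prod_mono, intro ballI conjI)
    fix i
    show "0 \<le> (1 + norm \<xi>) powr (-t)" by simp
    have m: "max 1 \<bar>\<xi> $ i\<bar> \<le> 1 + norm \<xi>" using component_le_norm_cart[of \<xi> i] by simp
    show "(1 + norm \<xi>) powr (-t) \<le> f1 t (\<xi> $ i)"
      unfolding f1_def using m t by (intro powr_mono2') auto
  qed
  moreover have "(\<Prod>i\<in>(UNIV::'n set). (1 + norm \<xi>) powr (-t)) = (1 + norm \<xi>) powr (-(t * real CARD('n)))"
  proof -
    have "(\<Prod>i\<in>(UNIV::'n set). (1 + norm \<xi>) powr (-t)) = ((1 + norm \<xi>) powr (-t)) ^ CARD('n)"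
      by simp
    also have "\<dots> = ((1 + norm \<xi>) powr (-t)) powr (real CARD('n))"
    proof -
      have pos: "1 + norm \<xi> \<noteq> 0" using norm_ge_zero[of \<xi>] by linarith
      show ?thesis using pos by (intro powr_realpow[symmetric]) simp
    qed
    also have "\<dots> = (1 + norm \<xi>) powr (-(t * real CARD('n)))"
      by (simp add: powr_powr)
    finally show ?thesis .
  qed
  ultimately show ?thesis by simp
qed

lemma max_bound:
  assumes s: "s \<ge> 0"
  shows "(max 1 (norm (\<xi>::'a::real_normed_vector))) powr (-s) \<le> 2 powr s * (1 + norm \<xi>) powr (-s)"
proof -
  have "(2 * max 1 (norm \<xi>)) powr (-s) \<le> (1 + norm \<xi>) powr (-s)"
    using s by (intro powr_mono2') (auto simp: add_pos_nonneg)
  then have "2 powr (-s) * (max 1 (norm \<xi>)) powr (-s) \<le> (1 + norm \<xi>) powr (-s)"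
    by (simp add: powr_mult)
  then have "2 powr s * (2 powr (-s) * (max 1 (norm \<xi>)) powr (-s)) \<le> 2 powr s * (1 + norm \<xi>) powr (-s)"
    by (rule mult_left_mono) simp
  moreover have "2 powr s * (2 powr (-s) * (max 1 (norm \<xi>)) powr (-s)) = (max 1 (norm \<xi>)) powr (-s)"
    by (simp add: mult.assoc[symmetric] powr_add[symmetric])
  ultimately show ?thesis by simp
qed

lemma rho_bound:
  fixes \<rho> :: "real^'n::finite \<Rightarrow> 'b::real_normed_vector"
  assumes cont: "continuous_on UNIV \<rho>"
    and C: "\<And>\<xi>. 1 \<le> norm \<xi> \<Longrightarrow> norm (\<rho> \<xi>) \<le> C * norm \<xi> powr (-s)"
    and s: "s > CARD('n)"
  shows "\<exists>K. \<forall>\<xi>. norm (\<rho> \<xi>) \<le> K * G (s / CARD('n)) \<xi>"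
proof -
  have "compact (\<rho> ` cball 0 1)"
    by (rule compact_continuous_image[OF continuous_on_subset[OF cont]]) auto
  then obtain M where M: "\<And>x. x \<in> cball 0 1 \<Longrightarrow> norm (\<rho> x) \<le> M"
    using compact_imp_bounded bounded_iff by (metis image_eqI)
  define K0 where "K0 = max M C"
  have "norm (\<rho> 0) \<le> M" using M[of 0] by simp
  then have "0 \<le> M" using norm_ge_zero order_trans by blast
  then have K0: "0 \<le> K0" by (simp add: K0_def le_max_iff_disj)
  have s0: "s \<ge> 0" using s by linarith
  have b1: "norm (\<rho> \<xi>) \<le> K0 * (max 1 (norm \<xi>)) powr (-s)" for \<xi>
  proof (cases "norm \<xi> \<le> 1")
    case True
    then have "max 1 (norm \<xi>) = 1" by simp
    then show ?thesis using M[of \<xi>] True by (simp add: K0_def)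
  next
    case False
    then have "max 1 (norm \<xi>) = norm \<xi>" by simp
    moreover have "C * norm \<xi> powr (-s) \<le> K0 * norm \<xi> powr (-s)"
      by (rule mult_right_mono) (auto simp: K0_def)
    ultimately show ?thesis using C[of \<xi>] False by simp
  qed
  have "norm (\<rho> \<xi>) \<le> (K0 * 2 powr s) * G (s / CARD('n)) \<xi>" for \<xi>
  proof -
    have "norm (\<rho> \<xi>) \<le> K0 * (2 powr s * (1 + norm \<xi>) powr (-s))"
      using b1[of \<xi>] max_bound[OF s0, of \<xi>] K0 by (meson mult_left_mono order_trans)
    also have "(1 + norm \<xi>) powr (-s) = (1 + norm \<xi>) powr (-((s / CARD('n)) * CARD('n)))"
      by simp
    also have "\<dots> \<le> G (s / CARD('n)) \<xi>"
      by (rule G_lower) (use s0 in simp)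
    finally show ?thesis using K0 by (simp add: mult_left_mono mult.assoc)
  qed
  then show ?thesis by blast
qed

lemma tau_bl: "bounded_linear (tau :: 'n::finite bop \<Rightarrow> complex)"
proof (rule bounded_linear_intro[where K=1])
  fix x y :: "'n bop" and r :: real
  show "tau (x + y) = tau x + tau y" by (simp add: tau_def plus_bop.rep_eq)
  show "tau (r *\<^sub>R x) = r *\<^sub>R tau x" by (simp add: tau_def scaleR_bop.rep_eq scaleR_conv_of_real)
  show "norm (tau x) \<le> norm x * 1" using entry_le_norm[of x 0 0] by (simp add: tau_def)
qed

lemma delta_0: "delta 0 u = u"
proof -
  have "dmat 0 (Rep_bop u) = Rep_bop u" by (rule ext)+ (simp add: dmat_def)
  then show ?thesis by (simp add: delta_def Rep_bop_inverse)
qed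

lemma mabs_0: "mabs 0 = 0" by (simp add: mabs_def)

theorem proposition13p21:
  fixes \<theta> :: "real^('n::{finite,linorder})^('n::{finite,linorder})" and q :: complex
    and P :: "('n::{finite,linorder}) bop \<Rightarrow> ('n::{finite,linorder}) bop"
    and \<rho> :: "real^('n::{finite,linorder}) \<Rightarrow> ('n::{finite,linorder}) bop"
  assumes "CARD('n) \<ge> 2"
    and "transpose \<theta> = - \<theta>"
    and "Re q < - real CARD('n)"
    and "P \<in> Psi \<theta> q"
    and "\<rho> \<in> Sq \<theta> q"
    and "\<forall>u\<in>Asmooth \<theta>. P u = Prho \<theta> \<rho> u"
    and "normalized \<rho>"
  shows "Trace \<theta> P = integral UNIV (\<lambda>\<xi>. tau (\<rho> \<xi>))"
proof -
  from assms(5) obtain D h H where fs: "fsmooth \<theta> UNIV \<rho> D" and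
    bd: "\<forall>N \<alpha> \<beta>. \<exists>C. \<forall>\<xi>. 1 \<le> norm \<xi> \<longrightarrow>
            norm (delta \<alpha> (D \<beta> \<xi> - (\<Sum>j<N. H j \<beta> \<xi>)))
              \<le> C * norm \<xi> powr (Re q - real N - real (mabs \<beta>))"
    unfolding Sq_def by blast
  from bd obtain C where C: "\<forall>\<xi>. 1 \<le> norm \<xi> \<longrightarrow>
            norm (delta 0 (D 0 \<xi> - (\<Sum>j<0. H j 0 \<xi>)))
              \<le> C * norm \<xi> powr (Re q - real 0 - real (mabs (0::nat^('n::{finite,linorder}))))"
    using spec[OF spec[OF spec[OF bd, of 0], of 0], of 0] by blast
  have D0: "D 0 \<xi> = \<rho> \<xi>" for \<xi> using fs unfolding fsmooth_def by blast
  define s where "s = - Re q"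
  have s: "s > CARD('n)" using assms(3) by (simp add: s_def)
  have Cb: "norm (\<rho> \<xi>) \<le> C * norm \<xi> powr (-s)" if "1 \<le> norm \<xi>" for \<xi>
    using C that by (simp add: D0 delta_0 mabs_0 s_def)
  have "continuous_on UNIV (\<lambda>\<xi>. delta 0 (D 0 \<xi>))" using fs unfolding fsmooth_def by blast
  then have cont: "continuous_on UNIV \<rho>" by (simp add: D0 delta_0)
  define t where "t = s / CARD('n)"
  have t: "t > 1" using s by (simp add: t_def)
  obtain K where K: "\<And>\<xi>. norm (\<rho> \<xi>) \<le> K * G t \<xi>"
    using rho_bound[OF cont Cb s] unfolding t_def by blast
  have intr: "\<rho> integrable_on UNIV"
  proof (rule integrable_on_all_intervals_integrable_bound[where g="\<lambda>x. K * G t x"])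
    show "(\<lambda>x. if x \<in> UNIV then \<rho> x else 0) integrable_on cbox a b" for a b
      using integrable_continuous[OF continuous_on_subset[OF cont]] by simp
    show "norm (\<rho> x) \<le> K * G t x" for x by (rule K)
    show "(\<lambda>x. K * G t x) integrable_on UNIV"
      using integrable_cmul[OF G_integrable[OF t], of K] by simp
  qed
  have n1: "(\<lambda>k. norm (K * G t (rvec k))) summable_on (UNIV :: (int^('n::{finite,linorder})) set)"
    using summable_on_cmult_right[OF lattice_summable[OF t], of "\<bar>K\<bar>"]
    by (simp add: abs_mult abs_of_nonneg G_nonneg)
  have n2: "(\<lambda>k. norm (\<rho> (rvec k))) summable_on (UNIV :: (int^('n::{finite,linorder})) set)"
  proof (rule Infinite_Sum.abs_summable_on_comparison_test[OF n1])
    fix k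
    show "norm (\<rho> (rvec k)) \<le> norm (K * G t (rvec k))"
      using K[of "rvec k"] by simp
  qed
  have summ: "(\<lambda>k. \<rho> (rvec k)) summable_on (UNIV :: (int^('n::{finite,linorder})) set)"
    by (rule Infinite_Sum.abs_summable_summable[OF n2])
  have "Trace \<theta> P = (\<Sum>\<^sub>\<infinity>k. tau (\<rho> (rvec k)))"
    unfolding Trace_def
    by (rule infsum_cong) (simp add: assms(6) Umon_Asmooth Prho_Umon hinner_mult_Umon)
  also have "\<dots> = tau (\<Sum>\<^sub>\<infinity>k. \<rho> (rvec k))"
    by (rule infsumI, rule has_sum_bounded_linear[OF tau_bl has_sum_infsum[OF summ]])
  also have "\<dots> = tau (integral UNIV \<rho>)"
    using assms(7) by (simp add: normalized_def)
  also have "\<dots> = integral UNIV (tau \<circ> \<rho>)"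
    by (rule integral_linear[OF intr tau_bl, symmetric])
  finally show ?thesis by (simp add: o_def)
qed


end
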